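(* Suppose there exists a $\mathcal{KL}_{\rm gen}$-$\operatorname{Fin}(X^{\rm in})$ upper bound $(\gamma,\theta)$ for $(X^{\rm in},T,\varphi)$. Then there exists $h\in\Omega([0,1])$ such that $\nu_k\le h(e^{-k})$ for all $k\in\mathbb N$. If moreover $(\gamma,\theta)$ is useful for $\nu$, then $h$ can be chosen so that $\{k\in\mathbb N:\nu_k>h(0)\}\neq\emptyset$.
   Context: Standing data: a nonempty set $X^{\rm in}\subseteq\mathbb R^d$, a map $T:\mathbb R^d\to\mathbb R^d$ ($T^k$ its $k$-fold composition), $\varphi:\mathbb R^d\to\mathbb R$ with $\varphi(0)=0$; $\nu_k=\sup_{x\in X^{\rm in}}\varphi(T^k(x))$, assumed finite for every $k$; $G^{>}_\nu=\{k:\nu_k>\limsup_n\nu_n\}$. $\Omega([0,1])$: functions $h:\mathbb R\to\mathbb R$ whose restriction to $[0,1]$ is strictly increasing and continuous. For $f:\mathbb R^d\to\mathbb R\cup\{+\infty\}$, $\overline f=\sup_{X^{\rm in}}f$; $\operatorname{Fin}(X^{\rm in})=\{f:\overline f<+\infty\}$. $\mathcal{KL}_{\rm gen}$: functions $\gamma:\mathbb R\times\mathbb R_+\to\mathbb R$, increasing in the first variable for each fixed second variable and decreasing in the second variable for each fixed first variable (not necessarily strictly, not necessarily continuous). $(\gamma,\theta)\in\mathcal{KL}_{\rm gen}\times\operatorname{Fin}(X^{\rm in})$ is a $\mathcal{KL}_{\rm gen}$-$\operatorname{Fin}(X^{\rm in})$ upper bound if $\varphi(T^k(x))\le\gamma(\theta(x),k)$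 for all $k\in\mathbb N$, $x\in X^{\rm in}$; it is useful for $\nu$ if $\{k\in G^{>}_\nu:\inf_{t\ge0}\gamma(\overline\theta,t)<\nu_k\}\ne\emptyset$. *)

theory Defs
  imports "HOL-Analysis.Analysis"
begin

definition nu :: "(real^'d) set \<Rightarrow> (real^'d \<Rightarrow> real^'d) \<Rightarrow> (real^'d \<Rightarrow> real) \<Rightarrow> nat \<Rightarrow> real" where
  "nu Xin T \<phi> k = (SUP x\<in>Xin. \<phi> ((T ^^ k) x))"

definition G_gt :: "(nat \<Rightarrow> real) \<Rightarrow> nat set" where
  "G_gt \<nu> = {k. ereal (\<nu> k) > limsup (\<lambda>n. ereal (\<nu> n))}"

definition Omega01 :: "(real \<Rightarrow> real) set" where
  "Omega01 = {h. strict_mono_on {0..1} h \<and> continuous_on {0..1} h}"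

definition sup_on :: "'a set \<Rightarrow> ('a \<Rightarrow> ereal) \<Rightarrow> ereal" where
  "sup_on Xin f = (SUP x\<in>Xin. f x)"

text \<open>Functions R^d -> R \<union> {+\<infinity>} are modelled as ereal-valued functions never equal to -\<infinity>.\<close>
definition Fin :: "'a set \<Rightarrow> ('a \<Rightarrow> ereal) set" where
  "Fin Xin = {f. (\<forall>x. f x \<noteq> -\<infinity>) \<and> sup_on Xin f < \<infinity>}"

text \<open>KL_gen: gamma : R x R_+ -> R, increasing in first variable, decreasing in second
  (on t \<ge> 0; values at t < 0 are irrelevant).\<close>
definition KL_gen :: "(real \<Rightarrow> real \<Rightarrow> real) set" where
  "KL_gen = {\<gamma>. (\<forall>t\<ge>0. mono (\<lambda>r. \<gamma> r t)) \<and>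
                  (\<forall>r s t. 0 \<le> s \<longrightarrow> s \<le> t \<longrightarrow> \<gamma> r t \<le> \<gamma> r s)}"

definition is_KL_Fin_upper_bound ::
  "(real^'d) set \<Rightarrow> (real^'d \<Rightarrow> real^'d) \<Rightarrow> (real^'d \<Rightarrow> real) \<Rightarrow>
   (real \<Rightarrow> real \<Rightarrow> real) \<Rightarrow> (real^'d \<Rightarrow> ereal) \<Rightarrow> bool" where
  "is_KL_Fin_upper_bound Xin T \<phi> \<gamma> \<theta> \<longleftrightarrow>
     \<gamma> \<in> KL_gen \<and> \<theta> \<in> Fin Xin \<and>
     (\<forall>k::nat. \<forall>x\<in>Xin. \<phi> ((T ^^ k) x) \<le> \<gamma> (real_of_ereal (\<theta> x)) (real k))"

definition is_useful ::
  "(real \<Rightarrow> real \<Rightarrow> real) \<Rightarrow> ereal \<Rightarrow> (nat \<Rightarrow> real) \<Rightarrow> bool" where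
  "is_useful \<gamma> thbar \<nu> \<longleftrightarrow>
     {k \<in> G_gt \<nu>. (INF t\<in>{0::real..}. ereal (\<gamma> (real_of_ereal thbar) t)) < ereal (\<nu> k)} \<noteq> {}"

end

theory Submission
  imports Defs
begin

lemma lin_Omega: assumes "(B::real) > 0" shows "(\<lambda>s. a + B * s) \<in> Omega01"
  unfolding Omega01_def
proof (intro CollectI conjI)
  show "strict_mono_on {0..1} (\<lambda>s. a + B * s)"
    by (rule strict_mono_onI) (use assms in auto)
  show "continuous_on {0..1} (\<lambda>s. a + B * s)" by (intro continuous_intros)
qed

theorem mainTheorem11:
  fixes Xin :: "(real^'d) set" and T :: "real^'d \<Rightarrow> real^'d" and \<phi> :: "real^'d \<Rightarrow> real"
    and \<gamma> :: "real \<Rightarrow> real \<Rightarrow> real" and \<theta> :: "real^'d \<Rightarrow> ereal"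
  assumes "Xin \<noteq> {}"
    and "\<phi> 0 = 0"
    and "\<And>k. bdd_above ((\<lambda>x. \<phi> ((T ^^ k) x)) ` Xin)"
    and "is_KL_Fin_upper_bound Xin T \<phi> \<gamma> \<theta>"
  shows "(\<exists>h\<in>Omega01. \<forall>k::nat. nu Xin T \<phi> k \<le> h (exp (- real k)))
    \<and> (is_useful \<gamma> (sup_on Xin \<theta>) (nu Xin T \<phi>) \<longrightarrow>
        (\<exists>h\<in>Omega01. (\<forall>k::nat. nu Xin T \<phi> k \<le> h (exp (- real k)))
                      \<and> {k. nu Xin T \<phi> k > h 0} \<noteq> {}))"
proof -
  define th where "th = real_of_ereal (sup_on Xin \<theta>)"
  have KL: "\<gamma> \<in> KL_gen" and Fn: "\<theta> \<in> Fin Xin"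
    and ub: "\<And>k x. x \<in> Xin \<Longrightarrow> \<phi> ((T ^^ k) x) \<le> \<gamma> (real_of_ereal (\<theta> x)) (real k)"
    using assms(4) unfolding is_KL_Fin_upper_bound_def by auto
  have monoA: "\<And>t r s. t \<ge> 0 \<Longrightarrow> r \<le> s \<Longrightarrow> \<gamma> r t \<le> \<gamma> s t"
  proof -
    fix t r s :: real assume "t \<ge> 0" "r \<le> s"
    moreover have "\<forall>t\<ge>0. mono (\<lambda>r. \<gamma> r t)" using KL unfolding KL_gen_def by blast
    ultimately show "\<gamma> r t \<le> \<gamma> s t" using monoD[of "\<lambda>r. \<gamma> r t"] by blast
  qed
  have decr: "\<And>r s t. 0 \<le> s \<Longrightarrow> s \<le> t \<Longrightarrow> \<gamma> r t \<le> \<gamma> r s"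
    using KL unfolding KL_gen_def by blast
  have fin: "\<And>x. \<theta> x \<noteq> -\<infinity>" and supfin: "sup_on Xin \<theta> < \<infinity>"
    using Fn unfolding Fin_def by auto
  have le: "\<And>x. x \<in> Xin \<Longrightarrow> real_of_ereal (\<theta> x) \<le> th"
  proof -
    fix x assume x: "x \<in> Xin"
    have "\<theta> x \<le> sup_on Xin \<theta>" unfolding sup_on_def using x by (rule SUP_upper)
    moreover have "\<theta> x < \<infinity>" using calculation supfin by auto
    ultimately show "real_of_ereal (\<theta> x) \<le> th" unfolding th_def using fin[of x] supfin
      by (cases "\<theta> x"; cases "sup_on Xin \<theta>") auto
  qed
  have nuc: "nu Xin T \<phi> k \<le> \<gamma> th (real k)" for k
    unfolding nu_def
  proof (rule cSUP_least[OF assms(1)])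
    fix x assume x: "x \<in> Xin"
    show "\<phi> ((T ^^ k) x) \<le> \<gamma> th (real k)"
      using ub[OF x, of k] monoA[of "real k", OF _ le[OF x]] by linarith
  qed
  define M where "M = \<gamma> th 0"
  have nuM: "nu Xin T \<phi> k \<le> M" for k
    using nuc[of k] decr[of 0 "real k" th] unfolding M_def by linarith
  have P1: "\<exists>h\<in>Omega01. \<forall>k::nat. nu Xin T \<phi> k \<le> h (exp (- real k))"
  proof (intro bexI allI)
    show "(\<lambda>s. M + 1 * s) \<in> Omega01" by (rule lin_Omega) simp
    fix k :: nat show "nu Xin T \<phi> k \<le> M + 1 * exp (- real k)"
      using nuM[of k] exp_gt_zero[of "- real k"] by linarith
  qed
  have P2: "\<exists>h\<in>Omega01. (\<forall>k::nat. nu Xin T \<phi> k \<le> h (exp (- real k)))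
                      \<and> {k. nu Xin T \<phi> k > h 0} \<noteq> {}"
    if U: "is_useful \<gamma> (sup_on Xin \<theta>) (nu Xin T \<phi>)"
  proof -
    obtain k0 where k0: "(INF t\<in>{0::real..}. ereal (\<gamma> th t)) < ereal (nu Xin T \<phi> k0)"
      using U unfolding is_useful_def th_def by auto
    then obtain t where t: "t \<ge> 0" "ereal (\<gamma> th t) < ereal (nu Xin T \<phi> k0)"
      by (auto simp: INF_less_iff)
    define a where "a = (\<gamma> th t + nu Xin T \<phi> k0) / 2"
    have a1: "\<gamma> th t < a" and a2: "a < nu Xin T \<phi> k0" using t(2) unfolding a_def by auto
    define N where "N = nat \<lceil>t\<rceil>"
    define B where "B = \<bar>M - a\<bar> * exp (real N) + 1"
    have Bpos: "B > 0" unfolding B_def by (simp add: add_nonneg_pos)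
    show ?thesis
    proof (intro bexI conjI allI)
      show "(\<lambda>s. a + B * s) \<in> Omega01" by (rule lin_Omega[OF Bpos])
      show "{k. nu Xin T \<phi> k > a + B * 0} \<noteq> {}" using a2 by auto
      fix k :: nat
      show "nu Xin T \<phi> k \<le> a + B * exp (- real k)"
      proof (cases "k \<ge> N")
        case True
        have "real k \<ge> t" using True unfolding N_def by linarith
        have "\<gamma> th (real k) \<le> \<gamma> th t" by (rule decr[OF t(1) \<open>real k \<ge> t\<close>])
        moreover have "B * exp (- real k) > 0" using Bpos by simp
        ultimately show ?thesis using nuc[of k] a1 by linarith
      next
        case False
        have e: "exp (real N) * exp (- real k) \<ge> 1"
          using False by (simp add: exp_minus field_simps)
        have "\<bar>M - a\<bar> * (exp (real N) * exp (- real k)) \<ge> \<bar>M - a\<bar>"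
          using e by (simp add: mult_le_cancel_left1)
        moreover have "B * exp (- real k) = \<bar>M - a\<bar> * (exp (real N) * exp (- real k)) + exp (- real k)"
          unfolding B_def by (simp add: algebra_simps)
        moreover have "exp (- real k) > 0" by simp
        ultimately have "B * exp (- real k) \<ge> \<bar>M - a\<bar>" by linarith
        then show ?thesis using nuM[of k] by linarith
      qed
    qed
  qed
  show ?thesis using P1 P2 by blast
qed

end
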